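(* Let $p\ge3$, let $f=f(x_1,\dots,x_p)$ be a smooth function, and let $(M,g_f)=(\mathbb{R}^{2p},g_f)$ be as defined in the context, with Hessian $H=(\partial_{x_i}\partial_{x_j}f)$. Let $P\in M$. (1) If $H(P)$ is definite, then for every non-null $x\in T_PM$, $J_W(x)$ has rank $p-1$ and $J_W(x)^2=0$. In particular, if $H$ is definite at every point, $(M,g_f)$ is conformally spacelike and conformally timelike Jordan Osserman. (2) If $H(P)$ is indefinite, then $(M,g_f)$ is neither conformally spacelike Jordan Osserman nor conformally timelike Jordan Osserman. (3) If $H(P)$ is non-degenerate, then for every oriented spacelike or timelike 2-plane $\pi\subset T_PM$, $W(\pi)$ has rank $2$ and $W(\pi)^2=0$. In particular, if $H$ is non-degenerate at every point, $(M,g_f)$ is conformally spacelike and conformally timelike Jordan Ivanov-Petrova.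
   Context: On $\mathbb{R}^{2p}$ with coordinates $(x_1,\dots,x_p,y_1,\dots,y_p)$ and a smooth $f=f(x_1,\dots,x_p)$, the neutral signature metric $g_f$ is defined by $g_f(\partial_{x_i},\partial_{x_j})=\partial_{x_i}f\cdot\partial_{x_j}f$, $g_f(\partial_{x_i},\partial_{y_j})=g_f(\partial_{y_j},\partial_{x_i})=\delta_{ij}$, $g_f(\partial_{y_i},\partial_{y_j})=0$. For a pseudo-Riemannian manifold of dimension $m\ge3$ with curvature 4-tensor $R$, Ricci tensor $\rho(x,y)=\sum_{ij}g^{ij}R(x,e_i,e_j,y)$, scalar curvature $\tau=\sum g^{ij}\rho(e_i,e_j)$, the Weyl tensor is $W(x,y,z,w)=R(x,y,z,w)-\frac1{m-2}\{\rho(x,w)g(y,z)+g(x,w)\rho(y,z)\}+\frac1{m-2}\{\rho(x,z)g(y,w)+g(x,z)\rho(y,w)\}+\frac{\tau}{(m-1)(m-2)}\{g(x,w)g(y,z)-g(x,z)g(y,w)\}$. The Jacobi operator: $g(J_W(x)y,z)=W(y,x,x,z)$. For an oriented spacelike or timelike 2-plane $\pi$ with oriented orthonormal basis $\{e_1,e_2\}$, $g(W(\pi)x,y)=W(e_1,e_2,x,y)$. Conformally spacelike (resp. timelike) Jordan Osserman: at each point $P$, the Jordan normal form of $J_{W_P}(x)$ is constant for $x$ with $g(x,x)=1$ (resp. $-1$). Conformally spacelike (resp. timelike) Jordan Ivanov-Petrova: at each point $P$, the Jordan normal form of $W_P(\pi)$ is constant over oriented spacelike (resp. timelike) 2-planes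 $\pi\subset T_PM$. (The Jordan normal form may vary with $P$.) *)

theory Defs
  imports "HOL-Analysis.Analysis"
begin

section \<open>Calculus on coordinate spaces\<close>

definition pd :: "'m::finite \<Rightarrow> (real^'m \<Rightarrow> real) \<Rightarrow> real^'m \<Rightarrow> real" where
  "pd k F P = deriv (\<lambda>t. F (P + t *\<^sub>R axis k 1)) 0"

fun iter_pd :: "'m::finite list \<Rightarrow> (real^'m \<Rightarrow> real) \<Rightarrow> real^'m \<Rightarrow> real" where
  "iter_pd [] F = F"
| "iter_pd (k # ks) F = pd k (iter_pd ks F)"

(* C^infinity: every iterated partial derivative is (Frechet) differentiable everywhere *)
definition smooth_fun :: "(real^'m::finite \<Rightarrow> real) \<Rightarrow> bool" where
  "smooth_fun F \<longleftrightarrow> (\<forall>ks x. iter_pd ks F differentiable (at x))"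

section \<open>Pseudo-Riemannian metric given by components gm P i j in global coordinates\<close>

type_synonym 'm metric = "real^'m \<Rightarrow> 'm \<Rightarrow> 'm \<Rightarrow> real"

definition gmat :: "'m::finite metric \<Rightarrow> real^'m \<Rightarrow> real^'m^'m" where
  "gmat gm P = (\<chi> i j. gm P i j)"

definition ginv :: "'m::finite metric \<Rightarrow> real^'m \<Rightarrow> 'm \<Rightarrow> 'm \<Rightarrow> real" where
  "ginv gm P i j = matrix_inv (gmat gm P) $ i $ j"

(* Christoffel symbols of the first kind: g(nabla_i d_j, d_k) *)
definition chr1 :: "'m::finite metric \<Rightarrow> real^'m \<Rightarrow> 'm \<Rightarrow> 'm \<Rightarrow> 'm \<Rightarrow> real" where
  "chr1 gm P i j k = (pd i (\<lambda>Q. gm Q j k) P + pd j (\<lambda>Q. gm Q i k) P - pd k (\<lambda>Q. gm Q i j) P) / 2"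

(* nabla_{d_i} d_j = sum_l chr i j l d_l *)
definition chr :: "'m::finite metric \<Rightarrow> real^'m \<Rightarrow> 'm \<Rightarrow> 'm \<Rightarrow> 'm \<Rightarrow> real" where
  "chr gm P i j l = (\<Sum>k\<in>UNIV. ginv gm P l k * chr1 gm P i j k)"

(* R(d_i,d_j) d_k = sum_l Rup i j k l d_l, with R(x,y) = nabla_x nabla_y - nabla_y nabla_x - nabla_[x,y] *)
definition Rup :: "'m::finite metric \<Rightarrow> real^'m \<Rightarrow> 'm \<Rightarrow> 'm \<Rightarrow> 'm \<Rightarrow> 'm \<Rightarrow> real" where
  "Rup gm P i j k l =
     pd i (\<lambda>Q. chr gm Q j k l) P - pd j (\<lambda>Q. chr gm Q i k l) P
     + (\<Sum>m\<in>UNIV. chr gm P j k m * chr gm P i m l - chr gm P i k m * chr gm P j m l)"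

(* R(d_i,d_j,d_k,d_l) = g(R(d_i,d_j)d_k, d_l) *)
definition Rcoord :: "'m::finite metric \<Rightarrow> real^'m \<Rightarrow> 'm \<Rightarrow> 'm \<Rightarrow> 'm \<Rightarrow> 'm \<Rightarrow> real" where
  "Rcoord gm P i j k l = (\<Sum>n\<in>UNIV. Rup gm P i j k n * gm P n l)"

definition gform :: "'m::finite metric \<Rightarrow> real^'m \<Rightarrow> real^'m \<Rightarrow> real^'m \<Rightarrow> real" where
  "gform gm P x y = (\<Sum>i\<in>UNIV. \<Sum>j\<in>UNIV. x$i * y$j * gm P i j)"

definition curv :: "'m::finite metric \<Rightarrow> real^'m \<Rightarrow> real^'m \<Rightarrow> real^'m \<Rightarrow> real^'m \<Rightarrow> real^'m \<Rightarrow> real" where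
  "curv gm P x y z w =
     (\<Sum>i\<in>UNIV. \<Sum>j\<in>UNIV. \<Sum>k\<in>UNIV. \<Sum>l\<in>UNIV. x$i * y$j * z$k * w$l * Rcoord gm P i j k l)"

definition ricci :: "'m::finite metric \<Rightarrow> real^'m \<Rightarrow> real^'m \<Rightarrow> real^'m \<Rightarrow> real" where
  "ricci gm P x y = (\<Sum>i\<in>UNIV. \<Sum>j\<in>UNIV. ginv gm P i j * curv gm P x (axis i 1) (axis j 1) y)"

definition scal :: "'m::finite metric \<Rightarrow> real^'m \<Rightarrow> real" where
  "scal gm P = (\<Sum>i\<in>UNIV. \<Sum>j\<in>UNIV. ginv gm P i j * ricci gm P (axis i 1) (axis j 1))"

definition weyl :: "'m::finite metric \<Rightarrow> real^'m \<Rightarrow> real^'m \<Rightarrow> real^'m \<Rightarrow> real^'m \<Rightarrow> real^'m \<Rightarrow> real" where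
  "weyl gm P x y z w =
     (let m = real CARD('m); g = gform gm P; \<rho> = ricci gm P; \<tau> = scal gm P in
      curv gm P x y z w
      - (\<rho> x w * g y z + g x w * \<rho> y z) / (m - 2)
      + (\<rho> x z * g y w + g x z * \<rho> y w) / (m - 2)
      + \<tau> / ((m - 1) * (m - 2)) * (g x w * g y z - g x z * g y w))"

(* the endomorphism T with g(T y, z) = B(y,z), B given by the matrix B$a$b = B(e_a,e_b) *)
definition op_of_form :: "'m::finite metric \<Rightarrow> real^'m \<Rightarrow> real^'m^'m \<Rightarrow> real^'m^'m" where
  "op_of_form gm P B = matrix_inv (gmat gm P) ** transpose B"

(* Jacobi operator of the Weyl tensor: g(J_W(x) y, z) = W(y,x,x,z) *)
definition jacobiW :: "'m::finite metric \<Rightarrow> real^'m \<Rightarrow> real^'m \<Rightarrow> real^'m^'m" where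
  "jacobiW gm P x = op_of_form gm P (\<chi> a b. weyl gm P (axis a 1) x x (axis b 1))"

(* W(pi) for pi spanned by the oriented orthonormal basis e1, e2: g(W(pi)x,y) = W(e1,e2,x,y) *)
definition weylPi :: "'m::finite metric \<Rightarrow> real^'m \<Rightarrow> real^'m \<Rightarrow> real^'m \<Rightarrow> real^'m^'m" where
  "weylPi gm P e1 e2 = op_of_form gm P (\<chi> a b. weyl gm P e1 e2 (axis a 1) (axis b 1))"

(* two real square matrices have the same Jordan normal form iff they are similar *)
definition same_jnf :: "real^'m^'m \<Rightarrow> real^'m^'m \<Rightarrow> bool" where
  "same_jnf A B \<longleftrightarrow> (\<exists>S. invertible S \<and> B = S ** A ** matrix_inv S)"

definition conf_spacelike_JO :: "'m::finite metric \<Rightarrow> bool" where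
  "conf_spacelike_JO gm \<longleftrightarrow> (\<forall>P x y. gform gm P x x = 1 \<and> gform gm P y y = 1
       \<longrightarrow> same_jnf (jacobiW gm P x) (jacobiW gm P y))"

definition conf_timelike_JO :: "'m::finite metric \<Rightarrow> bool" where
  "conf_timelike_JO gm \<longleftrightarrow> (\<forall>P x y. gform gm P x x = -1 \<and> gform gm P y y = -1
       \<longrightarrow> same_jnf (jacobiW gm P x) (jacobiW gm P y))"

(* {e1,e2} oriented orthonormal basis of a spacelike (eps = 1) / timelike (eps = -1) 2-plane *)
definition on_pair :: "'m::finite metric \<Rightarrow> real^'m \<Rightarrow> real \<Rightarrow> real^'m \<Rightarrow> real^'m \<Rightarrow> bool" where
  "on_pair gm P eps e1 e2 \<longleftrightarrow>
     gform gm P e1 e1 = eps \<and> gform gm P e2 e2 = eps \<and> gform gm P e1 e2 = 0"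

definition conf_spacelike_IP :: "'m::finite metric \<Rightarrow> bool" where
  "conf_spacelike_IP gm \<longleftrightarrow> (\<forall>P e1 e2 u1 u2. on_pair gm P 1 e1 e2 \<and> on_pair gm P 1 u1 u2
       \<longrightarrow> same_jnf (weylPi gm P e1 e2) (weylPi gm P u1 u2))"

definition conf_timelike_IP :: "'m::finite metric \<Rightarrow> bool" where
  "conf_timelike_IP gm \<longleftrightarrow> (\<forall>P e1 e2 u1 u2. on_pair gm P (-1) e1 e2 \<and> on_pair gm P (-1) u1 u2
       \<longrightarrow> same_jnf (weylPi gm P e1 e2) (weylPi gm P u1 u2))"

section \<open>The metric g_f on R^{2p}; coordinates Inl i = x_i, Inr i = y_i\<close>

definition xpart :: "real^('n::finite + 'n) \<Rightarrow> real^'n" where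
  "xpart P = (\<chi> i. P $ Inl i)"

definition gf :: "(real^'n::finite \<Rightarrow> real) \<Rightarrow> ('n + 'n) metric" where
  "gf f P a b = (case (a, b) of
      (Inl i, Inl j) \<Rightarrow> pd i f (xpart P) * pd j f (xpart P)
    | (Inl i, Inr j) \<Rightarrow> (if i = j then 1 else 0)
    | (Inr i, Inl j) \<Rightarrow> (if i = j then 1 else 0)
    | (Inr i, Inr j) \<Rightarrow> 0)"

definition hess :: "(real^'n::finite \<Rightarrow> real) \<Rightarrow> real^'n \<Rightarrow> real^'n^'n" where
  "hess f x = (\<chi> i j. pd i (pd j f) x)"

definition definite_mat :: "real^'n::finite^'n \<Rightarrow> bool" where
  "definite_mat H \<longleftrightarrow> (\<forall>v. v \<noteq> 0 \<longrightarrow> v \<bullet> (H *v v) > 0) \<or> (\<forall>v. v \<noteq> 0 \<longrightarrow> v \<bullet> (H *v v) < 0)"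

definition indefinite_mat :: "real^'n::finite^'n \<Rightarrow> bool" where
  "indefinite_mat H \<longleftrightarrow> (\<exists>v w. v \<bullet> (H *v v) > 0 \<and> w \<bullet> (H *v w) < 0)"

definition nondegenerate_mat :: "real^'n::finite^'n \<Rightarrow> bool" where
  "nondegenerate_mat H \<longleftrightarrow> det H \<noteq> 0"

end

theory Submission
  imports Defs
begin


lemma has_pd_dir:
  fixes F :: "real^'m::finite \<Rightarrow> real"
  assumes "F differentiable (at (y + t *\<^sub>R v))"
  shows "((\<lambda>s. F (y + s *\<^sub>R v)) has_real_derivative frechet_derivative F (at (y + t *\<^sub>R v)) v) (at t)"
proof -
  let ?D = "frechet_derivative F (at (y + t *\<^sub>R v))"
  have d: "(F has_derivative ?D) (at ((\<lambda>s. y + s *\<^sub>R v) t))" using assms frechet_derivative_works by auto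
  have l: "linear ?D" using d has_derivative_linear by blast
  have "((\<lambda>s. y + s *\<^sub>R v) has_derivative (\<lambda>s. s *\<^sub>R v)) (at t)" by (auto intro!: derivative_eq_intros)
  from diff_chain_at[OF this d] have "((\<lambda>s. F (y + s *\<^sub>R v)) has_derivative (\<lambda>s. ?D (s *\<^sub>R v))) (at t)"
    by (simp add: o_def)
  moreover have "(\<lambda>s. ?D (s *\<^sub>R v)) = (*) (?D v)" using l by (auto simp: linear_scale)
  ultimately show ?thesis by (simp add: has_field_derivative_def)
qed

lemma pd_frechet:
  fixes F :: "real^'m::finite \<Rightarrow> real"
  assumes "F differentiable (at y)"
  shows "pd k F y = frechet_derivative F (at y) (axis k 1)"
  using has_pd_dir[of F y 0 "axis k 1"] assms unfolding pd_def by (simp add: DERIV_imp_deriv)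

lemma pd_has:
  fixes F :: "real^'m::finite \<Rightarrow> real"
  assumes "\<And>z. F differentiable (at z)"
  shows "((\<lambda>s. F (y + s *\<^sub>R axis k 1)) has_real_derivative pd k F (y + t *\<^sub>R axis k 1)) (at t)"
  using has_pd_dir[of F y t "axis k 1"] assms pd_frechet by metis

lemma mvt_step:
  fixes F :: "real^'m::finite \<Rightarrow> real"
  assumes dF: "\<And>z. F differentiable (at z)" and dG: "\<And>z. pd k F differentiable (at z)" and h: "h > 0"
  shows "\<exists>\<xi> \<eta>. 0 < \<xi> \<and> \<xi> < h \<and> 0 < \<eta> \<and> \<eta> < h \<and>
     F (x + h *\<^sub>R axis k 1 + h *\<^sub>R axis l 1) - F (x + h *\<^sub>R axis k 1) - F (x + h *\<^sub>R axis l 1) + F x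
       = h * h * pd l (pd k F) (x + \<xi> *\<^sub>R axis k 1 + \<eta> *\<^sub>R axis l 1)"
proof -
  let ?e = "axis k 1 :: real^'m" and ?d = "axis l 1 :: real^'m"
  define \<phi> where "\<phi> s = F ((x + h *\<^sub>R ?d) + s *\<^sub>R ?e) - F (x + s *\<^sub>R ?e)" for s
  have "\<And>s. (\<phi> has_real_derivative (pd k F ((x + h *\<^sub>R ?d) + s *\<^sub>R ?e) - pd k F (x + s *\<^sub>R ?e))) (at s)"
    unfolding \<phi>_def by (intro DERIV_diff pd_has dF)
  from MVT2[OF h this] obtain \<xi> where xi: "0 < \<xi>" "\<xi> < h"
    "\<phi> h - \<phi> 0 = (h - 0) * (pd k F ((x + h *\<^sub>R ?d) + \<xi> *\<^sub>R ?e) - pd k F (x + \<xi> *\<^sub>R ?e))" by blast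
  define \<psi> where "\<psi> t = pd k F ((x + \<xi> *\<^sub>R ?e) + t *\<^sub>R ?d)" for t
  have "\<And>t. (\<psi> has_real_derivative pd l (pd k F) ((x + \<xi> *\<^sub>R ?e) + t *\<^sub>R ?d)) (at t)"
    unfolding \<psi>_def by (intro pd_has dG)
  from MVT2[OF h this] obtain \<eta> where eta: "0 < \<eta>" "\<eta> < h"
    "\<psi> h - \<psi> 0 = (h - 0) * pd l (pd k F) ((x + \<xi> *\<^sub>R ?e) + \<eta> *\<^sub>R ?d)" by blast
  have "F (x + h *\<^sub>R ?e + h *\<^sub>R ?d) - F (x + h *\<^sub>R ?e) - F (x + h *\<^sub>R ?d) + F x = \<phi> h - \<phi> 0"
    unfolding \<phi>_def by (simp add: algebra_simps)
  also have "\<dots> = h * (\<psi> h - \<psi> 0)" using xi(3) unfolding \<psi>_def by (simp add: algebra_simps)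
  also have "\<dots> = h * h * pd l (pd k F) (x + \<xi> *\<^sub>R ?e + \<eta> *\<^sub>R ?d)" using eta(3) by simp
  finally show ?thesis using xi eta by blast
qed

lemma smooth_diff: "smooth_fun F \<Longrightarrow> F differentiable (at x)"
  unfolding smooth_fun_def by (metis iter_pd.simps(1))

lemma smooth_pd: "smooth_fun F \<Longrightarrow> smooth_fun (pd k F)"
proof -
  have "iter_pd ks (pd k F) = iter_pd (ks @ [k]) F" for ks
    by (induction ks) auto
  then show "smooth_fun F \<Longrightarrow> smooth_fun (pd k F)" unfolding smooth_fun_def by metis
qed

lemma abs_contra: "\<bar>p - a\<bar> < \<bar>a - b\<bar>/2 \<Longrightarrow> \<bar>q - b\<bar> < \<bar>a - b\<bar>/2 \<Longrightarrow> p = q \<Longrightarrow> False" for p q a b :: real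
  by (auto simp: abs_if split: if_splits)

lemma schwarz:
  fixes F :: "real^'m::finite \<Rightarrow> real"
  assumes sm: "smooth_fun F"
  shows "pd i (pd j F) x = pd j (pd i F) x"
proof (rule ccontr)
  assume ne: "pd i (pd j F) x \<noteq> pd j (pd i F) x"
  let ?A = "pd j (pd i F)" and ?B = "pd i (pd j F)"
  define \<epsilon> where "\<epsilon> = \<bar>?A x - ?B x\<bar> / 2"
  have ep: "\<epsilon> > 0" using ne unfolding \<epsilon>_def by auto
  have cA: "isCont ?A x" using smooth_diff[OF smooth_pd[OF smooth_pd[OF sm]]] differentiable_imp_continuous_within by blast
  have cB: "isCont ?B x" using smooth_diff[OF smooth_pd[OF smooth_pd[OF sm]]] differentiable_imp_continuous_within by blast
  obtain d1 where d1: "d1 > 0" "\<And>y. dist y x < d1 \<Longrightarrow> dist (?A y) (?A x) < \<epsilon>"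
    using cA ep unfolding continuous_at_eps_delta by blast
  obtain d2 where d2: "d2 > 0" "\<And>y. dist y x < d2 \<Longrightarrow> dist (?B y) (?B x) < \<epsilon>"
    using cB ep unfolding continuous_at_eps_delta by blast
  define h where "h = min d1 d2 / 4"
  have h: "h > 0" using d1 d2 unfolding h_def by auto
  have dF: "\<And>z. F differentiable (at z)" using smooth_diff[OF sm] .
  obtain \<xi> \<eta> where 1: "0 < \<xi>" "\<xi> < h" "0 < \<eta>" "\<eta> < h"
     "F (x + h *\<^sub>R axis i 1 + h *\<^sub>R axis j 1) - F (x + h *\<^sub>R axis i 1) - F (x + h *\<^sub>R axis j 1) + F x
       = h * h * ?A (x + \<xi> *\<^sub>R axis i 1 + \<eta> *\<^sub>R axis j 1)"
    using mvt_step[OF dF smooth_diff[OF smooth_pd[OF sm]] h] by blast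
  obtain \<xi>' \<eta>' where 2: "0 < \<xi>'" "\<xi>' < h" "0 < \<eta>'" "\<eta>' < h"
     "F (x + h *\<^sub>R axis j 1 + h *\<^sub>R axis i 1) - F (x + h *\<^sub>R axis j 1) - F (x + h *\<^sub>R axis i 1) + F x
       = h * h * ?B (x + \<xi>' *\<^sub>R axis j 1 + \<eta>' *\<^sub>R axis i 1)"
    using mvt_step[OF dF smooth_diff[OF smooth_pd[OF sm]] h] by blast
  have sw: "x + h *\<^sub>R axis j 1 + h *\<^sub>R axis i 1 = x + h *\<^sub>R axis i 1 + h *\<^sub>R axis j 1" by (simp add: algebra_simps)
  have "h * h * ?A (x + \<xi> *\<^sub>R axis i 1 + \<eta> *\<^sub>R axis j 1) = h * h * ?B (x + \<xi>' *\<^sub>R axis j 1 + \<eta>' *\<^sub>R axis i 1)"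
    using 1(5) 2(5)[unfolded sw] by linarith
  then have eq: "?A (x + \<xi> *\<^sub>R axis i 1 + \<eta> *\<^sub>R axis j 1) = ?B (x + \<xi>' *\<^sub>R axis j 1 + \<eta>' *\<^sub>R axis i 1)"
    using h by simp
  have nb: "norm (a *\<^sub>R axis k 1 + b *\<^sub>R axis l 1 :: real^'m) \<le> \<bar>a\<bar> + \<bar>b\<bar>" for a b k l
    by (rule order_trans[OF norm_triangle_ineq]) simp
  have "dist (x + \<xi> *\<^sub>R axis i 1 + \<eta> *\<^sub>R axis j 1) x < d1"
    using nb[of \<xi> i \<eta> j] 1 h_def d1 d2 by (simp add: dist_norm add.assoc)
  then have a: "\<bar>?A (x + \<xi> *\<^sub>R axis i 1 + \<eta> *\<^sub>R axis j 1) - ?A x\<bar> < \<epsilon>" using d1 by (simp add: dist_real_def)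
  have "dist (x + \<xi>' *\<^sub>R axis j 1 + \<eta>' *\<^sub>R axis i 1) x < d2"
    using nb[of \<xi>' j \<eta>' i] 2 h_def d1 d2 by (simp add: dist_norm add.assoc)
  then have b: "\<bar>?B (x + \<xi>' *\<^sub>R axis j 1 + \<eta>' *\<^sub>R axis i 1) - ?B x\<bar> < \<epsilon>" using d2 by (simp add: dist_real_def)
  from abs_contra[OF a[unfolded \<epsilon>_def] b[unfolded \<epsilon>_def] eq] show False .
qed



lemma pd_mult:
  fixes A B :: "real^'m::finite \<Rightarrow> real"
  assumes "A differentiable (at y)" "B differentiable (at y)"
  shows "pd k (\<lambda>x. A x * B x) y = pd k A y * B y + A y * pd k B y"
proof -
  have a: "((\<lambda>s. A (y + s *\<^sub>R axis k 1)) has_real_derivative pd k A y) (at 0)"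
    using has_pd_dir[of A y 0 "axis k 1"] assms pd_frechet by fastforce
  have b: "((\<lambda>s. B (y + s *\<^sub>R axis k 1)) has_real_derivative pd k B y) (at 0)"
    using has_pd_dir[of B y 0 "axis k 1"] assms pd_frechet by fastforce
  have "((\<lambda>s. A (y + s *\<^sub>R axis k 1) * B (y + s *\<^sub>R axis k 1)) has_real_derivative
     (pd k A y * B (y + 0 *\<^sub>R axis k 1) + pd k B y * A (y + 0 *\<^sub>R axis k 1))) (at 0)"
    by (rule DERIV_mult[OF a b])
  then show ?thesis unfolding pd_def[of k "\<lambda>x. A x * B x"] by (simp add: DERIV_imp_deriv algebra_simps)
qed

lemma pd_const: "pd k (\<lambda>x. c) y = 0"
  unfolding pd_def by simp

lemma xpart_add_l: "xpart (P + t *\<^sub>R axis (Inl i) 1) = xpart P + t *\<^sub>R axis i 1"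
  by (simp add: xpart_def vec_eq_iff axis_def)

lemma xpart_add_r: "xpart (P + t *\<^sub>R axis (Inr i) 1) = xpart P"
  by (simp add: xpart_def vec_eq_iff axis_def)

lemma pd_xpart_l: "pd (Inl i) (\<lambda>Q. G (xpart Q)) P = pd i G (xpart P)"
  unfolding pd_def xpart_add_l ..

lemma pd_xpart_r: "pd (Inr i) (\<lambda>Q. G (xpart Q)) P = 0"
  unfolding pd_def xpart_add_r by simp

lemma sum_UNIV_plus: "(\<Sum>c\<in>(UNIV::('a::finite + 'b::finite) set). g c) = (\<Sum>i\<in>UNIV. g (Inl i)) + (\<Sum>i\<in>UNIV. g (Inr i))"
  using sum.Plus[of "UNIV::'a set" "UNIV::'b set" g] by (simp add: UNIV_Plus_UNIV o_def)

lemma matrix_inv_eq: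
  fixes A B :: "real^'m::finite^'m"
  assumes "A ** B = mat 1" "B ** A = mat 1"
  shows "matrix_inv A = B"
proof -
  have "\<exists>A'. A ** A' = mat 1 \<and> A' ** A = mat 1" using assms by blast
  then have s: "A ** matrix_inv A = mat 1 \<and> matrix_inv A ** A = mat 1"
    unfolding matrix_inv_def by (rule someI_ex)
  have "matrix_inv A = matrix_inv A ** (A ** B)" using assms by (simp add: matrix_mul_rid)
  also have "\<dots> = (matrix_inv A ** A) ** B" by (simp add: matrix_mul_assoc)
  also have "\<dots> = B" using s by (simp add: matrix_mul_lid)
  finally show ?thesis .
qed

definition Ginv :: "(real^'n::finite \<Rightarrow> real) \<Rightarrow> real^('n+'n) \<Rightarrow> real^('n+'n)^('n+'n)" where
  "Ginv f P = (\<chi> a b. case (a, b) of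
      (Inl i, Inl j) \<Rightarrow> 0
    | (Inl i, Inr j) \<Rightarrow> (if i = j then 1 else 0)
    | (Inr i, Inl j) \<Rightarrow> (if i = j then 1 else 0)
    | (Inr i, Inr j) \<Rightarrow> - (pd i f (xpart P) * pd j f (xpart P)))"

lemma gmat_Ginv: "gmat (gf f) P ** Ginv f P = mat 1"
  unfolding matrix_matrix_mult_def
  apply (simp add: vec_eq_iff mat_def gmat_def Ginv_def gf_def sum_UNIV_plus)
  apply (intro allI)
  subgoal for a b by (cases a; cases b) (auto simp: mult.commute[of "if _ then _ else _"] if_distrib[of "\<lambda>x. _ * x"] sum_negf cong: if_cong)
  done

lemma Ginv_gmat: "Ginv f P ** gmat (gf f) P = mat 1"
  unfolding matrix_matrix_mult_def
  apply (simp add: vec_eq_iff mat_def gmat_def Ginv_def gf_def sum_UNIV_plus)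
  apply (intro allI)
  subgoal for a b by (cases a; cases b) (auto simp: mult.commute[of "if _ then _ else _"] if_distrib[of "\<lambda>x. _ * x"] sum_negf cong: if_cong)
  done

lemma ginv_gf: "ginv (gf f) P a b = Ginv f P $ a $ b"
  unfolding ginv_def by (simp add: matrix_inv_eq[OF gmat_Ginv Ginv_gmat])

lemma smooth_d0: "smooth_fun f \<Longrightarrow> f differentiable (at x)" by (rule smooth_diff)
lemma smooth_d1: "smooth_fun f \<Longrightarrow> pd i f differentiable (at x)" by (rule smooth_diff[OF smooth_pd])
lemma smooth_d2: "smooth_fun f \<Longrightarrow> pd i (pd j f) differentiable (at x)" by (rule smooth_diff[OF smooth_pd[OF smooth_pd]])

lemma pd_gf_LLL:
  assumes sm: "smooth_fun f"
  shows "pd (Inl i) (\<lambda>Q. gf f Q (Inl j) (Inl k)) P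
     = pd i (pd j f) (xpart P) * pd k f (xpart P) + pd j f (xpart P) * pd i (pd k f) (xpart P)"
proof -
  have "(\<lambda>Q. gf f Q (Inl j) (Inl k)) = (\<lambda>Q. (\<lambda>x. pd j f x * pd k f x) (xpart Q))"
    by (simp add: gf_def)
  then show ?thesis using pd_xpart_l[of i "\<lambda>x. pd j f x * pd k f x" P] by (simp add: pd_mult smooth_d1[OF sm])
qed

lemma pd_gf_zero:
  assumes "\<not> (\<exists>i j k. a = Inl i \<and> b = Inl j \<and> c = Inl k)"
  shows "pd a (\<lambda>Q. gf f Q b c) P = 0"
proof (cases "\<exists>j k. b = Inl j \<and> c = Inl k")
  case True
  then obtain j k where bc: "b = Inl j" "c = Inl k" by blast
  then obtain i where a: "a = Inr i" using assms by (cases a) auto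
  have "(\<lambda>Q. gf f Q (Inl j) (Inl k)) = (\<lambda>Q. (\<lambda>x. pd j f x * pd k f x) (xpart Q))"
    by (simp add: gf_def)
  then show ?thesis using bc a pd_xpart_r[of i "\<lambda>x. pd j f x * pd k f x" P] by simp
next
  case False
  then have "(\<lambda>Q. gf f Q b c) = (\<lambda>Q. gf f 0 b c)"
    by (cases b; cases c) (auto simp: gf_def)
  then show ?thesis by (simp add: pd_const)
qed

definition LLL :: "('n + 'n) \<Rightarrow> ('n + 'n) \<Rightarrow> ('n + 'n) \<Rightarrow> ('n \<Rightarrow> 'n \<Rightarrow> 'n \<Rightarrow> real) \<Rightarrow> real" where
  "LLL a b c g = (case a of Inl i \<Rightarrow> (case b of Inl j \<Rightarrow> (case c of Inl k \<Rightarrow> g i j k | Inr _ \<Rightarrow> 0) | Inr _ \<Rightarrow> 0) | Inr _ \<Rightarrow> 0)"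

lemma LLL_simps[simp]: "LLL (Inl i) (Inl j) (Inl k) g = g i j k" "LLL (Inr i) b c g = 0" "LLL a (Inr j) c g = 0" "LLL a b (Inr k) g = 0"
  unfolding LLL_def by (auto split: sum.split)

lemma chr1_gf:
  assumes sm: "smooth_fun f"
  shows "chr1 (gf f) P a b c = LLL a b c (\<lambda>i j k. pd i (pd j f) (xpart P) * pd k f (xpart P))"
proof (cases "\<exists>i j k. a = Inl i \<and> b = Inl j \<and> c = Inl k")
  case True
  then obtain i j k where abc: "a = Inl i" "b = Inl j" "c = Inl k" by blast
  show ?thesis unfolding abc chr1_def
    by (simp add: pd_gf_LLL[OF sm] schwarz[OF sm, of k i] schwarz[OF sm, of k j] schwarz[OF sm, of j i] algebra_simps)
next
  case False
  have "pd a (\<lambda>Q. gf f Q b c) P = 0" "pd b (\<lambda>Q. gf f Q a c) P = 0" "pd c (\<lambda>Q. gf f Q a b) P = 0"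
    by (rule pd_gf_zero; use False in blast)+
  moreover have "LLL a b c g = 0" for g using False by (cases a; cases b; cases c) auto
  ultimately show ?thesis unfolding chr1_def by simp
qed

definition LLR :: "('n + 'n) \<Rightarrow> ('n + 'n) \<Rightarrow> ('n + 'n) \<Rightarrow> ('n \<Rightarrow> 'n \<Rightarrow> 'n \<Rightarrow> real) \<Rightarrow> real" where
  "LLR a b c g = (case a of Inl i \<Rightarrow> (case b of Inl j \<Rightarrow> (case c of Inr k \<Rightarrow> g i j k | Inl _ \<Rightarrow> 0) | Inr _ \<Rightarrow> 0) | Inr _ \<Rightarrow> 0)"

lemma LLR_simps[simp]: "LLR (Inl i) (Inl j) (Inr k) g = g i j k" "LLR (Inr i) b c g = 0" "LLR a (Inr j) c g = 0" "LLR a b (Inl k) g = 0"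
  unfolding LLR_def by (auto split: sum.split)

lemma chr_gf:
  assumes sm: "smooth_fun f"
  shows "chr (gf f) P a b l = LLR a b l (\<lambda>i j k. pd i (pd j f) (xpart P) * pd k f (xpart P))"
  unfolding chr_def chr1_gf[OF sm] ginv_gf sum_UNIV_plus
  by (cases a; cases b; cases l) (auto simp: Ginv_def if_distrib[of "\<lambda>x. x * _"] cong: if_cong)

lemma pd_chr:
  assumes sm: "smooth_fun f"
  shows "pd a (\<lambda>Q. chr (gf f) Q b c l) P = (case a of Inl i \<Rightarrow> LLR b c l (\<lambda>j k m.
      pd i (pd j (pd k f)) (xpart P) * pd m f (xpart P) + pd j (pd k f) (xpart P) * pd i (pd m f) (xpart P)) | Inr _ \<Rightarrow> 0)"
proof (cases "\<exists>j k m. b = Inl j \<and> c = Inl k \<and> l = Inr m")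
  case True
  then obtain j k m where bcl: "b = Inl j" "c = Inl k" "l = Inr m" by blast
  have e: "(\<lambda>Q. chr (gf f) Q b c l) = (\<lambda>Q. (\<lambda>x. pd j (pd k f) x * pd m f x) (xpart Q))"
    using bcl by (simp add: chr_gf[OF sm])
  show ?thesis
  proof (cases a)
    case (Inl i)
    then show ?thesis unfolding e using pd_xpart_l[of i "\<lambda>x. pd j (pd k f) x * pd m f x" P] bcl
      by (simp add: pd_mult smooth_d1[OF sm] smooth_d2[OF sm])
  next
    case (Inr i)
    then show ?thesis unfolding e using pd_xpart_r[of i "\<lambda>x. pd j (pd k f) x * pd m f x" P] by simp
  qed
next
  case False
  have "LLR b c l g = 0" for g using False by (cases b; cases c; cases l) auto
  then have "(\<lambda>Q. chr (gf f) Q b c l) = (\<lambda>Q. 0)" by (simp add: chr_gf[OF sm])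
  then show ?thesis using \<open>\<And>g. LLR b c l g = 0\<close> by (simp add: pd_const split: sum.split)
qed

lemma Rup_gf:
  assumes sm: "smooth_fun f"
  shows "Rup (gf f) P a b c l = LLL a b c (\<lambda>i j k. case l of Inr m \<Rightarrow>
     pd j (pd k f) (xpart P) * pd i (pd m f) (xpart P) - pd i (pd k f) (xpart P) * pd j (pd m f) (xpart P) | Inl _ \<Rightarrow> 0)"
proof -
  have s: "(\<Sum>m\<in>UNIV. chr (gf f) P b c m * chr (gf f) P a m l - chr (gf f) P a c m * chr (gf f) P b m l) = 0"
  proof (rule sum.neutral, intro ballI)
    fix m :: "'a + 'a"
    show "chr (gf f) P b c m * chr (gf f) P a m l - chr (gf f) P a c m * chr (gf f) P b m l = 0"
      by (cases m) (simp_all add: chr_gf[OF sm])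
  qed
  show ?thesis unfolding Rup_def s pd_chr[OF sm]
    by (cases a; cases b; cases c; cases l) (simp_all add: schwarz[OF smooth_pd[OF sm], of _ _ _ "(xpart P)"] algebra_simps)
qed

lemma Rcoord_gf:
  assumes sm: "smooth_fun f"
  shows "Rcoord (gf f) P a b c d = LLL a b c (\<lambda>i j k. case d of Inl l \<Rightarrow>
     pd j (pd k f) (xpart P) * pd i (pd l f) (xpart P) - pd i (pd k f) (xpart P) * pd j (pd l f) (xpart P) | Inr _ \<Rightarrow> 0)"
  unfolding Rcoord_def Rup_gf[OF sm] sum_UNIV_plus
  by (cases a; cases b; cases c; cases d) (simp_all add: gf_def if_distrib[of "\<lambda>x. _ * x"] cong: if_cong)

definition hb :: "(real^'n::finite \<Rightarrow> real) \<Rightarrow> real^'n \<Rightarrow> real^'n \<Rightarrow> real^'n \<Rightarrow> real" where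
  "hb f p u v = (\<Sum>i\<in>UNIV. \<Sum>j\<in>UNIV. u$i * v$j * pd i (pd j f) p)"

lemma curv_gf:
  assumes sm: "smooth_fun f"
  shows "curv (gf f) P x y z w = hb f (xpart P) (xpart y) (xpart z) * hb f (xpart P) (xpart x) (xpart w)
     - hb f (xpart P) (xpart x) (xpart z) * hb f (xpart P) (xpart y) (xpart w)"
proof -
  let ?D = "\<lambda>i j. pd i (pd j f) (xpart P)"
  let ?X = "xpart x" and ?Y = "xpart y" and ?Z = "xpart z" and ?W = "xpart w"
  have 1: "curv (gf f) P x y z w = (\<Sum>i\<in>UNIV. \<Sum>j\<in>UNIV. \<Sum>k\<in>UNIV. \<Sum>l\<in>UNIV.
      ?X$i * ?Y$j * ?Z$k * ?W$l * (?D j k * ?D i l - ?D i k * ?D j l))"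
    unfolding curv_def Rcoord_gf[OF sm] sum_UNIV_plus by (simp add: xpart_def)
  have 2: "\<dots> = (\<Sum>i\<in>UNIV. \<Sum>j\<in>UNIV. \<Sum>k\<in>UNIV. \<Sum>l\<in>UNIV. ?X$i * ?Y$j * ?Z$k * ?W$l * ?D j k * ?D i l)
     - (\<Sum>i\<in>UNIV. \<Sum>j\<in>UNIV. \<Sum>k\<in>UNIV. \<Sum>l\<in>UNIV. ?X$i * ?Y$j * ?Z$k * ?W$l * ?D i k * ?D j l)"
    by (simp add: sum_subtractf algebra_simps)
  have 3: "(\<Sum>i\<in>UNIV. \<Sum>j\<in>UNIV. \<Sum>k\<in>UNIV. \<Sum>l\<in>UNIV. ?X$i * ?Y$j * ?Z$k * ?W$l * ?D j k * ?D i l)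
     = (\<Sum>j\<in>UNIV. \<Sum>i\<in>UNIV. \<Sum>k\<in>UNIV. \<Sum>l\<in>UNIV. ?X$i * ?Y$j * ?Z$k * ?W$l * ?D j k * ?D i l)"
    by (rule sum.swap)
  have 4: "\<dots> = hb f (xpart P) ?Y ?Z * hb f (xpart P) ?X ?W"
    unfolding hb_def by (simp add: sum_distrib_left sum_distrib_right algebra_simps)
  have 5: "(\<Sum>i\<in>UNIV. \<Sum>j\<in>UNIV. \<Sum>k\<in>UNIV. \<Sum>l\<in>UNIV. ?X$i * ?Y$j * ?Z$k * ?W$l * ?D i k * ?D j l)
     = (\<Sum>i\<in>UNIV. \<Sum>j\<in>UNIV. \<Sum>k\<in>UNIV. \<Sum>l\<in>UNIV. ?X$i * ?Y$j * ?Z$k * ?W$l * ?D i k * ?D j l)"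
    by (rule refl)
  have 6: "\<dots> = hb f (xpart P) ?X ?Z * hb f (xpart P) ?Y ?W"
    unfolding hb_def by (simp add: sum_distrib_left sum_distrib_right algebra_simps)
  show ?thesis using 1 2 3 4 5 6 by simp
qed



definition low :: "real^'n::finite^'n \<Rightarrow> real^('n+'n)^('n+'n)" where
  "low A = (\<chi> a b. case a of Inr i \<Rightarrow> (case b of Inl j \<Rightarrow> A$i$j | Inr _ \<Rightarrow> 0) | Inl _ \<Rightarrow> 0)"
definition blk :: "real^'n::finite^'n \<Rightarrow> real^('n+'n)^('n+'n)" where
  "blk A = (\<chi> a b. case a of Inl i \<Rightarrow> (case b of Inl j \<Rightarrow> A$i$j | Inr _ \<Rightarrow> 0) | Inr _ \<Rightarrow> 0)"
definition embR :: "real^'n::finite \<Rightarrow> real^('n+'n)" where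
  "embR u = (\<chi> a. case a of Inr i \<Rightarrow> u$i | Inl _ \<Rightarrow> 0)"
definition embL :: "real^'n::finite \<Rightarrow> real^('n+'n)" where
  "embL u = (\<chi> a. case a of Inl i \<Rightarrow> u$i | Inr _ \<Rightarrow> 0)"

lemma low_mult_vec: "low A *v v = embR (A *v xpart v)"
  by (simp add: vec_eq_iff matrix_vector_mult_def low_def embR_def xpart_def sum_UNIV_plus split: sum.split)

lemma low_sq: "low A ** low B = 0"
  apply (simp add: vec_eq_iff matrix_matrix_mult_def low_def sum_UNIV_plus)
  apply (intro allI)
  subgoal for a b by (cases a; cases b) simp_all
  done

lemma linear_embR: "linear embR"
  by (auto simp: linear_iff embR_def vec_eq_iff split: sum.split)

lemma inj_embR: "inj embR"
proof (rule injI)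
  fix u v :: "real^'n" assume "embR u = embR v"
  then have "\<forall>i. embR u $ Inr i = embR v $ Inr i" by simp
  then show "u = v" by (simp add: embR_def vec_eq_iff)
qed

lemma xpart_embL: "xpart (embL u) = u"
  by (simp add: xpart_def embL_def vec_eq_iff)

lemma rank_low: "rank (low A) = rank A"
proof -
  have "range (\<lambda>v. low A *v v) = embR ` range (\<lambda>u. A *v u)"
    unfolding low_mult_vec
  proof
    show "embR ` range ((*v) A) \<subseteq> range (\<lambda>v. embR (A *v xpart v))"
    proof clarify
      fix u show "embR (A *v u) \<in> range (\<lambda>v. embR (A *v xpart v))" using xpart_embL[of u] by (metis rangeI)
    qed
  qed auto
  then have "rank (low A) = dim (embR ` range (\<lambda>u. A *v u))" by (simp add: rank_dim_range)
  also have "\<dots> = dim (range (\<lambda>u. A *v u))"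
    by (rule dim_image_eq[OF linear_embR inj_on_subset[OF inj_embR subset_UNIV]])
  finally show ?thesis by (simp add: rank_dim_range)
qed

lemma op_blk: "op_of_form (gf f) P (blk N) = low (transpose N)"
  unfolding op_of_form_def matrix_inv_eq[OF gmat_Ginv Ginv_gmat]
  apply (simp add: vec_eq_iff matrix_matrix_mult_def low_def blk_def Ginv_def transpose_def sum_UNIV_plus)
  apply (intro allI)
  subgoal for a b by (cases a; cases b) (simp_all add: if_distrib[of "\<lambda>x. x * _"] cong: if_cong)
  done

lemma invertible_inv:
  fixes S :: "real^'m::finite^'m"
  assumes "invertible S"
  shows "S ** matrix_inv S = mat 1" "matrix_inv S ** S = mat 1"
proof -
  obtain A' where "S ** A' = mat 1" "A' ** S = mat 1" using assms unfolding invertible_def by blast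
  then show "S ** matrix_inv S = mat 1" "matrix_inv S ** S = mat 1" using matrix_inv_eq by auto
qed

lemma same_jnf_rank:
  fixes A B :: "real^'m::finite^'m"
  assumes "same_jnf A B"
  shows "rank A = rank B"
proof -
  obtain S where S: "invertible S" "B = S ** A ** matrix_inv S" using assms unfolding same_jnf_def by blast
  have "rank B \<le> rank A" using S(2) by (metis order_trans rank_mul_le_left rank_mul_le_right)
  moreover have "matrix_inv S ** B ** S = (matrix_inv S ** S) ** A ** (matrix_inv S ** S)"
    unfolding S(2) by (simp only: matrix_mul_assoc)
  then have "A = matrix_inv S ** B ** S" using invertible_inv[OF S(1)] by (simp add: matrix_mul_lid matrix_mul_rid)
  then have "rank A \<le> rank B" by (metis order_trans rank_mul_le_left rank_mul_le_right)
  ultimately show ?thesis by simp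
qed



lemma comp_dim:
  fixes S :: "'a::euclidean_space set"
  assumes "subspace S"
  shows "dim (orthogonal_comp S) + dim S = DIM('a)"
proof -
  have e: "{y \<in> UNIV. \<forall>x\<in>S. orthogonal x y} = orthogonal_comp S" by (auto simp: orthogonal_comp_def)
  have "dim {y \<in> UNIV. \<forall>x\<in>S. orthogonal x y} + dim S = dim (UNIV::'a set)"
    by (rule dim_subspace_orthogonal_to_vectors[OF assms subspace_UNIV subset_UNIV])
  then show ?thesis unfolding e dim_UNIV .
qed

lemma ker_facts:
  fixes f :: "'a::euclidean_space \<Rightarrow> 'b::euclidean_space"
  assumes lf: "linear f"
  shows "inj_on f (orthogonal_comp {x. f x = 0})" "f ` (orthogonal_comp {x. f x = 0}) = range f"
    "dim (orthogonal_comp {x. f x = 0}) = dim (range f)"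
    "dim (orthogonal_comp {x. f x = 0}) + dim {x. f x = 0} = DIM('a)"
proof -
  let ?K = "{x. f x = 0}" let ?C = "orthogonal_comp ?K"
  have sK: "subspace ?K" by (rule linear_subspace_kernel[OF lf])
  have sC: "subspace ?C" by (rule subspace_orthogonal_comp)
  have KC: "?K \<inter> ?C = {0}" by (rule orthogonal_Int_0[OF sK])
  show inj: "inj_on f ?C"
  proof (rule inj_onI)
    fix x y assume xy: "x \<in> ?C" "y \<in> ?C" "f x = f y"
    then have "x - y \<in> ?K" using lf by (simp add: linear_diff)
    moreover have "x - y \<in> ?C" using xy sC by (simp add: subspace_diff)
    ultimately have "x - y \<in> {0}" using KC by blast
    then show "x = y" by simp
  qed
  show im: "f ` ?C = range f"
  proof
    show "range f \<subseteq> f ` ?C"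
    proof clarify
      fix x
      have "x \<in> ?K + ?C" using subspace_sum_orthogonal_comp[OF sK] by simp
      then obtain k c where "k \<in> ?K" "c \<in> ?C" "x = k + c" by (meson set_plus_elim)
      then have "f x = f c" using lf by (simp add: linear_add)
      then show "f x \<in> f ` ?C" using \<open>c \<in> ?C\<close> by blast
    qed
  qed (rule image_mono[OF subset_UNIV])
  have "dim (f ` ?C) = dim ?C"
    by (rule dim_image_eq[OF lf]) (simp add: span_eq_iff[THEN iffD2, OF sC] inj)
  then show "dim ?C = dim (range f)" using im by simp
  show "dim ?C + dim ?K = DIM('a)" by (rule comp_dim[OF sK])
qed

lemma rank_equiv_lin:
  fixes f g :: "'a::euclidean_space \<Rightarrow> 'a"
  assumes lf: "linear f" and lg: "linear g" and d: "dim (range f) = dim (range g)"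
  shows "\<exists>p q. linear p \<and> linear q \<and> bij p \<and> bij q \<and> (\<forall>x. g x = p (f (q x)))"
proof -
  define Kf where "Kf = {x. f x = 0}"
  define Kg where "Kg = {x. g x = 0}"
  define Cf where "Cf = orthogonal_comp Kf"
  define Cg where "Cg = orthogonal_comp Kg"
  define Rf where "Rf = range f"
  define Rg where "Rg = range g"
  have sKf: "subspace Kf" unfolding Kf_def by (rule linear_subspace_kernel[OF lf])
  have sKg: "subspace Kg" unfolding Kg_def by (rule linear_subspace_kernel[OF lg])
  have sCf: "subspace Cf" "subspace Cg" unfolding Cf_def Cg_def by (rule subspace_orthogonal_comp)+
  have sRf: "subspace Rf" "subspace Rg" unfolding Rf_def Rg_def
    by (rule linear_subspace_image[OF _ subspace_UNIV], fact)+
  note kf = ker_facts[OF lf, folded Kf_def Cf_def Rf_def]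
  note kg = ker_facts[OF lg, folded Kg_def Cg_def Rg_def]
  have dC: "dim Cg = dim Cf" using kf kg d unfolding Rf_def Rg_def by simp
  have dK: "dim Kg = dim Kf" using kf(4) kg(4) dC by simp
  have dR: "dim (orthogonal_comp Rf) = dim (orthogonal_comp Rg)"
    using comp_dim[OF sRf(1)] comp_dim[OF sRf(2)] d unfolding Rf_def Rg_def by simp
  have sumK: "Kf + Cf = UNIV" "Kg + Cg = UNIV" unfolding Cf_def Cg_def
    using subspace_sum_orthogonal_comp sKf sKg by blast+
  have sumR: "Rf + orthogonal_comp Rf = UNIV" "Rg + orthogonal_comp Rg = UNIV"
    using subspace_sum_orthogonal_comp sRf by blast+
  have IntR: "Rf \<inter> orthogonal_comp Rf = {0}" using orthogonal_Int_0 sRf by blast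
  (* the map q *)
  obtain q1 where q1: "linear q1" "q1 ` Cg = Cf" "\<And>x. x \<in> Cg \<Longrightarrow> norm (q1 x) = norm x"
    using isometry_subspaces[OF sCf(2) sCf(1) dC] by blast
  obtain q2 where q2: "linear q2" "q2 ` Kg = Kf"
    using isometry_subspaces[OF sKg sKf dK] by blast
  have injq1: "inj_on q1 Cg"
  proof (rule inj_onI)
    fix x y assume "x \<in> Cg" "y \<in> Cg" "q1 x = q1 y"
    then have "norm (q1 (x - y)) = norm (x - y)" using q1(3) sCf(2) by (simp add: subspace_diff)
    then show "x = y" using \<open>q1 x = q1 y\<close> q1(1) by (simp add: linear_diff)
  qed
  obtain Bc where Bc: "Bc \<subseteq> Cg" "independent Bc" "Cg \<subseteq> span Bc" "card Bc = dim Cg"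
    using basis_exists by blast
  obtain Bk where Bk: "Bk \<subseteq> Kg" "independent Bk" "Kg \<subseteq> span Bk" "card Bk = dim Kg"
    using basis_exists by blast
  have fBc: "finite Bc" "finite Bk" using Bc Bk independent_imp_finite by blast+
  have spq: "span (Bc \<union> Bk) = UNIV"
  proof -
    have "Kg + Cg \<subseteq> span (Bc \<union> Bk)"
    proof
      fix x assume "x \<in> Kg + Cg"
      then obtain k c where "k \<in> Kg" "c \<in> Cg" "x = k + c" by (meson set_plus_elim)
      then show "x \<in> span (Bc \<union> Bk)" using Bc Bk
        by (meson in_mono span_add span_mono sup_ge1 sup_ge2)
    qed
    then show ?thesis using sumK(2) by auto
  qed
  have indq: "independent (Bc \<union> Bk)"
  proof (rule card_le_dim_spanning[of _ UNIV])
    show "card (Bc \<union> Bk) \<le> dim (UNIV::'a set)"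
      using card_Un_le[of Bc Bk] Bc(4) Bk(4) kg(4) by (simp add: dim_UNIV Cg_def Kg_def)
  qed (use spq fBc in auto)
  obtain q where q: "linear q" "\<And>x. x \<in> Bc \<union> Bk \<Longrightarrow> q x = (if x \<in> Cg then q1 x else q2 x)"
    using linear_independent_extend[OF indq, of "\<lambda>x. if x \<in> Cg then q1 x else q2 x"] by blast
  have qC: "q x = q1 x" if "x \<in> Cg" for x
    by (rule linear_eq_on_span[OF q(1) q1(1), of Bc]) (use q Bc that in auto)
  have qK: "q x = q2 x" if "x \<in> Kg" for x
  proof (rule linear_eq_on_span[OF q(1) q2(1), of Bk])
    fix b assume b: "b \<in> Bk"
    show "q b = q2 b"
    proof (cases "b \<in> Cg")
      case True
      then have "b = 0" using b Bk(1) orthogonal_Int_0[OF sKg] unfolding Cg_def by blast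
      then show ?thesis using q(1) q2(1) by (simp add: linear_0)
    qed (use q b in auto)
  qed (use Bk that in auto)
  have surjq: "surj q"
  proof -
    have "y \<in> range q" for y
    proof -
      have "y \<in> Kf + Cf" using sumK by simp
      then obtain k c where kc: "k \<in> Kf" "c \<in> Cf" "y = k + c" by (meson set_plus_elim)
      obtain x1 where "x1 \<in> Kg" "k = q2 x1" using kc q2(2) by blast
      obtain x2 where "x2 \<in> Cg" "c = q1 x2" using kc q1(2) by blast
      have "q (x1 + x2) = y" using qC qK \<open>x1 \<in> Kg\<close> \<open>x2 \<in> Cg\<close> \<open>k = q2 x1\<close> \<open>c = q1 x2\<close> kc q(1)
        by (simp add: linear_add)
      then show ?thesis by blast
    qed
    then show ?thesis by auto
  qed
  have bijq: "bij q" using linear_surjective_imp_injective[OF q(1) surjq] surjq by (simp add: bij_def)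
  (* the map p *)
  define h where "h = f \<circ> q1"
  have injh: "inj_on h Cg" unfolding h_def
    using injq1 kf(1) q1(2) by (metis comp_inj_on image_subset_iff)
  have hC: "h ` Cg = Rf" unfolding h_def using q1(2) kf(2) by (metis image_comp)
  have lh: "linear h" unfolding h_def using lf q1(1) by (simp add: linear_compose)
  obtain Br where Br: "Br \<subseteq> orthogonal_comp Rf" "independent Br" "orthogonal_comp Rf \<subseteq> span Br" "card Br = dim (orthogonal_comp Rf)"
    using basis_exists by blast
  obtain Br' where Br': "Br' \<subseteq> orthogonal_comp Rg" "independent Br'" "orthogonal_comp Rg \<subseteq> span Br'" "card Br' = dim (orthogonal_comp Rg)"
    using basis_exists by blast
  have fBr: "finite Br" "finite Br'" using Br Br' independent_imp_finite by blast+
  obtain \<sigma> where \<sigma>: "bij_betw \<sigma> Br Br'" using finite_same_card_bij[OF fBr] Br(4) Br'(4) dR by auto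
  have spanhBc: "span (h ` Bc) = Rf"
  proof -
    have "span Bc = Cg" using Bc sCf(2) by (metis span_subspace)
    then show ?thesis using span_linear_image[OF lh, of Bc] hC by simp
  qed
  have spp: "span (h ` Bc \<union> Br) = UNIV"
  proof -
    have "Rf + orthogonal_comp Rf \<subseteq> span (h ` Bc \<union> Br)"
    proof
      fix x assume "x \<in> Rf + orthogonal_comp Rf"
      then obtain k c where "k \<in> Rf" "c \<in> orthogonal_comp Rf" "x = k + c" by (meson set_plus_elim)
      then show "x \<in> span (h ` Bc \<union> Br)" using Br spanhBc
        by (metis in_mono span_add span_mono sup_ge1 sup_ge2)
    qed
    then show ?thesis using sumR(1) by auto
  qed
  have indp: "independent (h ` Bc \<union> Br)"
  proof (rule card_le_dim_spanning[of _ UNIV])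
    have "card (h ` Bc \<union> Br) \<le> card Bc + card Br" using card_Un_le[of "h ` Bc" Br] card_image_le[OF fBc(1), of h] by linarith
    then show "card (h ` Bc \<union> Br) \<le> dim (UNIV::'a set)"
      using Bc(4) Br(4) dC kf(3) comp_dim[OF sRf(1)] by (simp add: dim_UNIV Rf_def)
  qed (use spp fBc fBr in auto)
  obtain p where p: "linear p" "\<And>x. x \<in> h ` Bc \<union> Br \<Longrightarrow> p x = (if x \<in> h ` Bc then g (inv_into Bc h x) else \<sigma> x)"
    using linear_independent_extend[OF indp, of "\<lambda>x. if x \<in> h ` Bc then g (inv_into Bc h x) else \<sigma> x"] by blast
  have ph: "p (h c) = g c" if "c \<in> Bc" for c
  proof -
    have "inj_on h Bc" using injh Bc(1) inj_on_subset by blast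
    then show ?thesis using p(2)[of "h c"] that by (simp add: inv_into_f_f)
  qed
  have p\<sigma>: "p b = \<sigma> b" if "b \<in> Br" for b
  proof -
    have "b \<notin> h ` Bc"
    proof
      assume "b \<in> h ` Bc"
      then have "b \<in> Rf" using hC Bc(1) by blast
      then have "b = 0" using IntR Br(1) that by blast
      then show False using Br(2) that by (metis dependent_zero)
    qed
    then show ?thesis using p(2)[of b] that by simp
  qed
  have eq: "g x = p (f (q x))" for x
  proof -
    have lpfq: "linear (\<lambda>x. p (f (q x)))" using linear_compose[OF linear_compose[OF q(1) lf] p(1)] by (simp add: o_def)
    show ?thesis
    proof (rule linear_eq_on_span[OF lg lpfq, of "Bc \<union> Bk"])
      fix b assume "b \<in> Bc \<union> Bk"
      then show "g b = p (f (q b))"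
      proof
        assume b: "b \<in> Bc"
        then have "q b = q1 b" using qC Bc(1) by blast
        then show ?thesis using ph[OF b] by (simp add: h_def)
      next
        assume b: "b \<in> Bk"
        then have "q b \<in> Kf" using qK Bk(1) q2(2) by blast
        moreover have "g b = 0" using b Bk(1) Kg_def by blast
        ultimately show ?thesis using p(1) by (simp add: Kf_def linear_0)
      qed
    qed (use spq in auto)
  qed
  have surjp: "surj p"
  proof -
    have sub: "subspace (range p)" by (rule linear_subspace_image[OF p(1) subspace_UNIV])
    have "g ` Bc \<union> Br' \<subseteq> range p"
    proof
      fix y assume "y \<in> g ` Bc \<union> Br'"
      then show "y \<in> range p"
      proof
        assume "y \<in> g ` Bc" then obtain c where "c \<in> Bc" "y = g c" by blast
        then show ?thesis using ph by (metis rangeI)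
      next
        assume "y \<in> Br'" then obtain b where "b \<in> Br" "y = \<sigma> b" using \<sigma> by (metis bij_betw_imp_surj_on imageE)
        then show ?thesis using p\<sigma> by (metis rangeI)
      qed
    qed
    then have "span (g ` Bc \<union> Br') \<subseteq> range p" using sub by (metis span_minimal)
    moreover have "span (g ` Bc \<union> Br') = UNIV"
    proof -
      have sg: "span (g ` Bc) = Rg"
      proof -
        have "span Bc = Cg" using Bc sCf(2) by (metis span_subspace)
        then show ?thesis using span_linear_image[OF lg, of Bc] kg(2) by (simp add: Rg_def)
      qed
      have "Rg + orthogonal_comp Rg \<subseteq> span (g ` Bc \<union> Br')"
      proof
        fix x assume "x \<in> Rg + orthogonal_comp Rg"
        then obtain k c where "k \<in> Rg" "c \<in> orthogonal_comp Rg" "x = k + c" by (meson set_plus_elim)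
        then show "x \<in> span (g ` Bc \<union> Br')" using Br' sg
          by (metis in_mono span_add span_mono sup_ge1 sup_ge2)
      qed
      then show ?thesis using sumR(2) by auto
    qed
    ultimately show ?thesis by auto
  qed
  have bijp: "bij p" using linear_surjective_imp_injective[OF p(1) surjp] surjp by (simp add: bij_def)
  show ?thesis using p(1) q(1) bijp bijq eq by blast
qed



lemma rank_equiv:
  fixes A B :: "real^'n::finite^'n"
  assumes "rank A = rank B"
  shows "\<exists>P Q. invertible P \<and> invertible Q \<and> B = P ** A ** Q"
proof -
  have "dim (range ((*v) A)) = dim (range ((*v) B))" using assms by (simp add: rank_dim_range)
  then obtain p q where pq: "linear p" "linear q" "bij p" "bij q" "\<And>x. B *v x = p (A *v (q x))"
    using rank_equiv_lin[OF matrix_vector_mul_linear matrix_vector_mul_linear] by blast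
  have mp: "matrix p *v x = p x" "matrix q *v x = q x" for x
    using pq(1,2) by (simp_all add: matrix_works linear_matrix_vector_mul_eq)
  have "(*v) (matrix p) = p" "(*v) (matrix q) = q" using mp by (simp_all add: fun_eq_iff)
  then have "invertible (matrix p)" "invertible (matrix q)"
    unfolding invertible_eq_bij using pq(3,4) by simp_all
  moreover have "B = matrix p ** A ** matrix q"
    unfolding matrix_eq by (simp add: matrix_vector_mul_assoc[symmetric] mp pq(5))
  ultimately show ?thesis by blast
qed

definition dg :: "real^'n::finite^'n \<Rightarrow> real^'n^'n \<Rightarrow> real^('n+'n)^('n+'n)" where
  "dg X Y = (\<chi> a b. case a of Inl i \<Rightarrow> (case b of Inl j \<Rightarrow> X$i$j | Inr _ \<Rightarrow> 0)
                            | Inr i \<Rightarrow> (case b of Inr j \<Rightarrow> Y$i$j | Inl _ \<Rightarrow> 0))"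

lemma dg_mult: "dg X Y ** dg X' Y' = dg (X ** X') (Y ** Y')"
  apply (simp add: vec_eq_iff matrix_matrix_mult_def dg_def sum_UNIV_plus)
  apply (intro allI)
  subgoal for a b by (cases a; cases b) simp_all
  done

lemma dg_one: "dg (mat 1) (mat 1) = mat 1"
  apply (simp add: vec_eq_iff dg_def mat_def)
  apply (intro allI)
  subgoal for a b by (cases a; cases b) simp_all
  done

lemma dg_low: "dg X Y ** low A = low (Y ** A)"
  apply (simp add: vec_eq_iff matrix_matrix_mult_def dg_def low_def sum_UNIV_plus)
  apply (intro allI)
  subgoal for a b by (cases a; cases b) simp_all
  done

lemma low_dg: "low A ** dg X Y = low (A ** X)"
  apply (simp add: vec_eq_iff matrix_matrix_mult_def dg_def low_def sum_UNIV_plus)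
  apply (intro allI)
  subgoal for a b by (cases a; cases b) simp_all
  done

lemma low_same:
  fixes A B :: "real^'n::finite^'n"
  assumes "rank A = rank B"
  shows "same_jnf (low A) (low B)"
proof -
  obtain P Q where PQ: "invertible P" "invertible Q" "B = P ** A ** Q" using rank_equiv[OF assms] by blast
  let ?S = "dg (matrix_inv Q) P" and ?S' = "dg Q (matrix_inv P)"
  have 1: "?S ** ?S' = mat 1" "?S' ** ?S = mat 1"
    using invertible_inv[OF PQ(1)] invertible_inv[OF PQ(2)] by (simp_all add: dg_mult dg_one)
  then have inv: "matrix_inv ?S = ?S'" by (rule matrix_inv_eq)
  have "invertible ?S" using 1 unfolding invertible_def by blast
  moreover have "?S ** low A ** matrix_inv ?S = low B"
    unfolding inv PQ(3) by (simp add: dg_low low_dg)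
  ultimately show ?thesis unfolding same_jnf_def by metis
qed

lemma rank_nullity_mat:
  fixes A :: "real^'n::finite^'m::finite"
  shows "rank A + dim {x. A *v x = 0} = CARD('n)"
  using ker_facts[OF matrix_vector_mul_linear[of A]] by (simp add: rank_dim_range DIM_cart)



lemma xpart_axis[simp]: "xpart (axis (Inl i) 1) = axis i 1" "xpart (axis (Inr i) 1) = 0"
  by (simp_all add: xpart_def vec_eq_iff axis_def)

lemma hb_zero[simp]: "hb f p 0 v = 0" "hb f p u 0 = 0"
  by (simp_all add: hb_def)

lemma ricci_gf: "smooth_fun f \<Longrightarrow> ricci (gf f) P x y = 0"
  unfolding ricci_def
proof (rule sum.neutral, intro ballI, rule sum.neutral, intro ballI)
  fix a b :: "'a + 'a" assume sm: "smooth_fun f"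
  show "ginv (gf f) P a b * curv (gf f) P x (axis a 1) (axis b 1) y = 0"
    by (cases a; cases b) (simp_all add: ginv_gf Ginv_def curv_gf[OF sm])
qed

lemma scal_gf: "smooth_fun f \<Longrightarrow> scal (gf f) P = 0"
  unfolding scal_def by (simp add: ricci_gf)

lemma weyl_gf: "smooth_fun f \<Longrightarrow> weyl (gf f) P x y z w = curv (gf f) P x y z w"
  unfolding weyl_def Let_def by (simp add: ricci_gf scal_gf)

definition JN :: "(real^'n::finite \<Rightarrow> real) \<Rightarrow> real^'n \<Rightarrow> real^'n \<Rightarrow> real^'n^'n" where
  "JN f p X = (\<chi> i j. hb f p X X * hb f p (axis i 1) (axis j 1) - hb f p (axis i 1) X * hb f p X (axis j 1))"

definition PN :: "(real^'n::finite \<Rightarrow> real) \<Rightarrow> real^'n \<Rightarrow> real^'n \<Rightarrow> real^'n \<Rightarrow> real^'n^'n" where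
  "PN f p E1 E2 = (\<chi> i j. hb f p E2 (axis i 1) * hb f p E1 (axis j 1) - hb f p E1 (axis i 1) * hb f p E2 (axis j 1))"

lemma jacobiW_gf:
  assumes sm: "smooth_fun f"
  shows "jacobiW (gf f) P x = low (transpose (JN f (xpart P) (xpart x)))"
proof -
  have "(\<chi> a b. weyl (gf f) P (axis a 1) x x (axis b 1)) = blk (JN f (xpart P) (xpart x))"
    apply (simp add: vec_eq_iff blk_def JN_def weyl_gf[OF sm] curv_gf[OF sm])
    apply (intro allI)
    subgoal for a b by (cases a; cases b) simp_all
    done
  then show ?thesis by (simp add: jacobiW_def op_blk)
qed

lemma weylPi_gf:
  assumes sm: "smooth_fun f"
  shows "weylPi (gf f) P e1 e2 = low (transpose (PN f (xpart P) (xpart e1) (xpart e2)))"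
proof -
  have "(\<chi> a b. weyl (gf f) P e1 e2 (axis a 1) (axis b 1)) = blk (PN f (xpart P) (xpart e1) (xpart e2))"
    apply (simp add: vec_eq_iff blk_def PN_def weyl_gf[OF sm] curv_gf[OF sm])
    apply (intro allI)
    subgoal for a b by (cases a; cases b) simp_all
    done
  then show ?thesis by (simp add: weylPi_def op_blk)
qed

definition ypart :: "real^('n::finite + 'n) \<Rightarrow> real^'n" where
  "ypart P = (\<chi> i. P $ Inr i)"

definition Fv :: "(real^'n::finite \<Rightarrow> real) \<Rightarrow> real^('n + 'n) \<Rightarrow> real^'n" where
  "Fv f P = (\<chi> i. pd i f (xpart P))"

lemma gform_gf: "gform (gf f) P x y = (xpart x \<bullet> Fv f P) * (xpart y \<bullet> Fv f P) + xpart x \<bullet> ypart y + ypart x \<bullet> xpart y"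
  unfolding gform_def sum_UNIV_plus
  by (simp add: gf_def xpart_def ypart_def Fv_def inner_vec_def sum_product if_distrib[of "\<lambda>x. _ * x"]
      algebra_simps sum.distrib cong: if_cong)



lemma hb_hess: "hb f p u v = u \<bullet> (hess f p *v v)"
  by (simp add: hb_def inner_vec_def matrix_vector_mult_def hess_def sum_distrib_left algebra_simps)

lemma hb_sym: "smooth_fun f \<Longrightarrow> hb f p u v = hb f p v u"
  unfolding hb_def by (subst sum.swap) (simp add: schwarz algebra_simps)

lemma hb_axis: "hb f p (axis i 1) v = (hess f p *v v) $ i"
  by (simp add: hb_hess inner_axis' )

lemma hb_axis2: "hb f p u (axis j 1) = (\<Sum>i\<in>UNIV. u$i * pd i (pd j f) p)"
  unfolding hb_def by (simp add: axis_def if_distrib[of "\<lambda>x. _ * x"] if_distrib[of "\<lambda>x. x * _"] cong: if_cong)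

lemma hb_axis_sum: "(\<Sum>j\<in>UNIV. hb f p u (axis j 1) * v$j) = hb f p u v"
proof -
  have "(\<Sum>j\<in>UNIV. hb f p u (axis j 1) * v$j) = (\<Sum>j\<in>UNIV. (\<Sum>i\<in>UNIV. u$i * pd i (pd j f) p) * v$j)"
    by (simp only: hb_axis2)
  also have "\<dots> = (\<Sum>j\<in>UNIV. \<Sum>i\<in>UNIV. u$i * (v$j * pd i (pd j f) p))"
    by (simp add: sum_distrib_right sum_distrib_left algebra_simps)
  also have "\<dots> = (\<Sum>i\<in>UNIV. \<Sum>j\<in>UNIV. u$i * (v$j * pd i (pd j f) p))"
    by (rule sum.swap)
  also have "\<dots> = hb f p u v" by (simp add: hb_def algebra_simps)
  finally show ?thesis .
qed

lemma JN_mult: "JN f p X *v v = hb f p X X *\<^sub>R (hess f p *v v) - hb f p X v *\<^sub>R (hess f p *v X)"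
proof -
  have "(JN f p X *v v) $ i = hb f p X X * (\<Sum>j\<in>UNIV. hb f p (axis i 1) (axis j 1) * v$j)
       - hb f p (axis i 1) X * (\<Sum>j\<in>UNIV. hb f p X (axis j 1) * v$j)" for i
    by (simp add: JN_def matrix_vector_mult_def sum_distrib_left sum_subtractf algebra_simps)
  then show ?thesis unfolding hb_axis_sum by (simp add: vec_eq_iff hb_axis algebra_simps)
qed

lemma PN_mult: "smooth_fun f \<Longrightarrow> PN f p E1 E2 *v v = hb f p E1 v *\<^sub>R (hess f p *v E2) - hb f p E2 v *\<^sub>R (hess f p *v E1)"
proof -
  assume "smooth_fun f"
  have "(PN f p E1 E2 *v v) $ i = hb f p E2 (axis i 1) * (\<Sum>j\<in>UNIV. hb f p E1 (axis j 1) * v$j)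
       - hb f p E1 (axis i 1) * (\<Sum>j\<in>UNIV. hb f p E2 (axis j 1) * v$j)" for i
    by (simp add: PN_def matrix_vector_mult_def sum_distrib_left sum_subtractf algebra_simps)
  then show ?thesis unfolding hb_axis_sum using \<open>smooth_fun f\<close>
    by (simp add: vec_eq_iff hb_axis[symmetric] hb_sym[of f p _ "axis _ 1"] algebra_simps)
qed



lemma hb_scale2: "hb f p u (k *\<^sub>R v) = k * hb f p u v"
  by (simp add: hb_hess matrix_vector_mult_scaleR)

lemma hb_hess2: "smooth_fun f \<Longrightarrow> hb f p u v = (hess f p *v u) \<bullet> v"
  using hb_sym[of f p u v] by (simp add: hb_hess inner_commute)

lemma rank_JN_full:
  fixes X :: "real^'n::finite"
  assumes sm: "smooth_fun f" and inj: "\<And>v. hess f p *v v = 0 \<Longrightarrow> v = 0" and c: "hb f p X X \<noteq> 0"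
  shows "rank (JN f p X) = CARD('n) - 1"
proof -
  let ?H = "hess f p" let ?c = "hb f p X X"
  have X0: "X \<noteq> 0" using c by auto
  have ker: "{v. JN f p X *v v = 0} = span {X}"
  proof
    show "{v. JN f p X *v v = 0} \<subseteq> span {X}"
    proof clarify
      fix v assume "JN f p X *v v = 0"
      then have "?H *v (?c *\<^sub>R v - hb f p X v *\<^sub>R X) = 0"
        by (simp add: JN_mult matrix_vector_mult_diff_distrib matrix_vector_mult_scaleR)
      then have "?c *\<^sub>R v - hb f p X v *\<^sub>R X = 0" by (rule inj)
      then have e: "?c *\<^sub>R v = hb f p X v *\<^sub>R X" by simp
      have "v = (1 / ?c) *\<^sub>R (?c *\<^sub>R v)" using c by simp
      also have "\<dots> = (hb f p X v / ?c) *\<^sub>R X" unfolding e by simp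
      finally have "v = (hb f p X v / ?c) *\<^sub>R X" .
      then show "v \<in> span {X}" unfolding span_singleton by blast
    qed
    show "span {X} \<subseteq> {v. JN f p X *v v = 0}"
      unfolding span_singleton by (auto simp: JN_mult hb_scale2 matrix_vector_mult_scaleR)
  qed
  have "dim (span {X}) = 1" using X0 by (simp add: dim_span)
  then show ?thesis using rank_nullity_mat[of "JN f p X"] ker by simp
qed

lemma rank_JN_one:
  fixes X :: "real^'n::finite"
  assumes sm: "smooth_fun f" and h: "hess f p *v X \<noteq> 0" and c: "hb f p X X = 0"
  shows "rank (JN f p X) = 1"
proof -
  have ker: "{v. JN f p X *v v = 0} = {v. (hess f p *v X) \<bullet> v = 0}"
  proof -
    have c': "(hess f p *v X) \<bullet> X = 0" using c hb_hess2[OF sm] by metis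
    show ?thesis using h by (auto simp: JN_mult hb_hess2[OF sm] c')
  qed
  have d: "dim {v. (hess f p *v X) \<bullet> v = 0} = CARD('n) - 1"
    using dim_hyperplane[OF h] by (simp add: DIM_cart)
  have r: "rank (JN f p X) + dim {v. (hess f p *v X) \<bullet> v = 0} = CARD('n)"
    using rank_nullity_mat[of "JN f p X"] ker by simp
  have "CARD('n) > 0" by simp
  then show ?thesis using r d by linarith
qed

lemma JN_zero:
  assumes sm: "smooth_fun f" and h: "hess f p *v X = 0"
  shows "JN f p X = 0"
  unfolding matrix_eq using h by (simp add: JN_mult hb_hess2[OF sm])

lemma JN_nonzero:
  assumes sm: "smooth_fun f" and c: "hb f p X X > 0" and w: "hb f p w w < 0"
  shows "JN f p X \<noteq> 0"
proof
  assume "JN f p X = 0"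
  then have "w \<bullet> (JN f p X *v w) = 0" by simp
  moreover have "w \<bullet> (JN f p X *v w) = hb f p X X * hb f p w w - (hb f p X w)^2"
    using hb_sym[OF sm, of p X w] by (simp add: JN_mult inner_diff_right hb_hess power2_eq_square)
  moreover have "hb f p X X * hb f p w w < 0" using c w by (simp add: mult_pos_neg)
  ultimately show False by (smt (verit) zero_le_power2)
qed

lemma rank_PN:
  fixes E1 E2 :: "real^'n::finite"
  assumes sm: "smooth_fun f"
    and ind: "\<And>a b. a *\<^sub>R (hess f p *v E1) + b *\<^sub>R (hess f p *v E2) = 0 \<Longrightarrow> a = 0 \<and> b = 0"
  shows "rank (PN f p E1 E2) = 2"
proof -
  let ?u = "hess f p *v E1" and ?w = "hess f p *v E2"
  have uw: "?u \<noteq> ?w" using ind[of 1 "-1"] by auto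
  have w0: "?w \<noteq> 0" using ind[of 0 1] by auto
  have "?u \<notin> span {?w}"
  proof
    assume "?u \<in> span {?w}"
    then obtain k where "?u = k *\<^sub>R ?w" unfolding span_singleton by blast
    then show False using ind[of 1 "-k"] by auto
  qed
  then have indep: "independent {?u, ?w}" using uw w0 by (simp add: independent_insert)
  have d2: "dim (span {?u, ?w}) = 2" by (simp only: dim_span_eq_card_independent[OF indep]) (simp add: uw)
  have ker: "{v. PN f p E1 E2 *v v = 0} = {y \<in> UNIV. \<forall>x\<in>span {?u, ?w}. orthogonal x y}"
  proof -
    have "PN f p E1 E2 *v v = 0 \<longleftrightarrow> ?u \<bullet> v = 0 \<and> ?w \<bullet> v = 0" for v
    proof
      assume "PN f p E1 E2 *v v = 0"
      then have "(- (?w \<bullet> v)) *\<^sub>R ?u + (?u \<bullet> v) *\<^sub>R ?w = 0"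
        by (simp add: PN_mult[OF sm] hb_hess2[OF sm] algebra_simps)
      then show "?u \<bullet> v = 0 \<and> ?w \<bullet> v = 0" using ind by fastforce
    qed (simp add: PN_mult[OF sm] hb_hess2[OF sm])
    moreover have "(\<forall>x\<in>span {?u, ?w}. orthogonal x y) \<longleftrightarrow> ?u \<bullet> y = 0 \<and> ?w \<bullet> y = 0" for y
    proof
      assume "\<forall>x\<in>span {?u, ?w}. orthogonal x y"
      then show "?u \<bullet> y = 0 \<and> ?w \<bullet> y = 0" by (simp add: span_base orthogonal_def)
    next
      assume a: "?u \<bullet> y = 0 \<and> ?w \<bullet> y = 0"
      show "\<forall>x\<in>span {?u, ?w}. orthogonal x y"
      proof
        fix x assume "x \<in> span {?u, ?w}"
        then have "orthogonal y x" by (rule orthogonal_to_span) (use a in \<open>auto simp: orthogonal_def inner_commute\<close>)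
        then show "orthogonal x y" by (simp add: orthogonal_commute)
      qed
    qed
    ultimately show ?thesis by auto
  qed
  have "dim {y \<in> UNIV. \<forall>x\<in>span {?u, ?w}. orthogonal x y} + dim (span {?u, ?w}) = dim (UNIV :: (real^'n) set)"
    by (rule dim_subspace_orthogonal_to_vectors) auto
  then have "dim {v. PN f p E1 E2 *v v = 0} + 2 = CARD('n)" using ker d2 by (simp add: dim_UNIV DIM_cart)
  then show ?thesis using rank_nullity_mat[of "PN f p E1 E2"] by simp
qed



lemma hb_scale1: "hb f p (k *\<^sub>R u) v = k * hb f p u v"
  by (simp add: hb_hess)

lemma nondeg_inj: "nondegenerate_mat H \<Longrightarrow> H *v v = 0 \<Longrightarrow> v = 0"
  unfolding nondegenerate_mat_def
  by (metis invertible_det_nz invertible_eq_bij bij_is_inj injD matrix_vector_mult_0_right)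

lemma definite_inj: "definite_mat H \<Longrightarrow> H *v v = 0 \<Longrightarrow> v = 0"
  unfolding definite_mat_def by (metis inner_zero_right less_irrefl)

lemma definite_ne: "definite_mat H \<Longrightarrow> v \<noteq> 0 \<Longrightarrow> v \<bullet> (H *v v) \<noteq> 0"
  unfolding definite_mat_def by (metis less_irrefl)

lemma xpart_lin: "xpart (a *\<^sub>R x + b *\<^sub>R y) = a *\<^sub>R xpart x + b *\<^sub>R xpart y"
  by (simp add: xpart_def vec_eq_iff)
lemma ypart_lin: "ypart (a *\<^sub>R x + b *\<^sub>R y) = a *\<^sub>R ypart x + b *\<^sub>R ypart y"
  by (simp add: ypart_def vec_eq_iff)

lemma nonnull_xpart: "gform (gf f) P x x \<noteq> 0 \<Longrightarrow> xpart x \<noteq> 0"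
  by (auto simp: gform_gf)

definition mk :: "real^'n::finite \<Rightarrow> real^'n \<Rightarrow> real^('n+'n)" where
  "mk X Y = (\<chi> a. case a of Inl i \<Rightarrow> X$i | Inr i \<Rightarrow> Y$i)"

lemma mk_parts[simp]: "xpart (mk X Y) = X" "ypart (mk X Y) = Y"
  by (simp_all add: mk_def xpart_def ypart_def vec_eq_iff)

lemma exists_unit:
  fixes X :: "real^'n::finite"
  assumes "X \<noteq> 0"
  shows "\<exists>x. xpart x = X \<and> gform (gf f) P x x = eps"
proof -
  define s where "s = (eps - (X \<bullet> Fv f P)^2) / 2 / (X \<bullet> X)"
  have "X \<bullet> X \<noteq> 0" using assms by simp
  then have "X \<bullet> (s *\<^sub>R X) = (eps - (X \<bullet> Fv f P)^2) / 2" unfolding s_def by simp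
  then have "gform (gf f) P (mk X (s *\<^sub>R X)) (mk X (s *\<^sub>R X)) = eps"
    by (simp add: gform_gf inner_commute[of "s *\<^sub>R X" X] power2_eq_square)
  then show ?thesis by (metis mk_parts(1))
qed

lemma on_pair_indep:
  assumes op: "on_pair (gf f) P eps e1 e2" and eps: "eps \<noteq> 0"
    and ab: "a *\<^sub>R xpart e1 + b *\<^sub>R xpart e2 = 0"
  shows "a = 0 \<and> b = 0"
proof -
  let ?v = "a *\<^sub>R e1 + b *\<^sub>R e2"
  have "xpart ?v = 0" using ab by (simp add: xpart_lin)
  then have z: "gform (gf f) P ?v ?v = 0" by (simp add: gform_gf)
  have g: "gform (gf f) P e1 e1 = eps" "gform (gf f) P e2 e2 = eps" "gform (gf f) P e1 e2 = 0"
    using op unfolding on_pair_def by auto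
  have "gform (gf f) P ?v ?v = a * a * gform (gf f) P e1 e1 + 2 * a * b * gform (gf f) P e1 e2 + b * b * gform (gf f) P e2 e2"
    unfolding gform_gf xpart_lin ypart_lin
    by (simp add: inner_add_left inner_add_right inner_commute[of "ypart e1" "xpart e2"] inner_commute[of "ypart e2" "xpart e1"] algebra_simps)
  then have "eps * (a * a + b * b) = 0" using z g by (simp add: algebra_simps)
  then have "a * a + b * b = 0" using eps by simp
  then show ?thesis using sum_squares_eq_zero_iff by blast
qed

lemma null_exists:
  fixes v w :: "real^'n::finite"
  assumes sm: "smooth_fun f" and v: "hb f p v v > 0" and w: "hb f p w w < 0"
  shows "\<exists>X. X \<noteq> 0 \<and> hb f p X X = 0"
proof -
  define A where "A = hb f p v v"
  define B where "B = hb f p v w"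
  define C where "C = hb f p w w"
  define D where "D = B^2 - A * C"
  have D: "D \<ge> 0" using v w unfolding D_def A_def C_def by (smt (verit) mult_pos_neg zero_le_power2)
  define t where "t = (sqrt D - B) / C"
  have C0: "C \<noteq> 0" using w C_def by simp
  have sq: "sqrt D * sqrt D = D" using D by simp
  have q: "hb f p (v + t *\<^sub>R w) (v + t *\<^sub>R w) = A + 2 * t * B + t * t * C"
    unfolding A_def B_def C_def using hb_sym[OF sm, of p w v]
    by (simp add: hb_hess matrix_vector_right_distrib matrix_vector_mult_scaleR inner_add_left inner_add_right algebra_simps)
  have "C * (A + 2 * t * B + t * t * C) = (sqrt D * sqrt D) - B^2 + A * C"
    unfolding t_def using C0 by (simp add: field_simps power2_eq_square)
  then have "A + 2 * t * B + t * t * C = 0" using sq C0 unfolding D_def by simp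
  moreover have "v + t *\<^sub>R w \<noteq> 0"
  proof
    assume "v + t *\<^sub>R w = 0"
    then have "v = (-t) *\<^sub>R w" by (simp add: eq_neg_iff_add_eq_0 add.commute)
    then have "hb f p v v = (-t) * ((-t) * hb f p w w)" by (simp only: hb_scale1 hb_scale2)
    then have "hb f p v v = t * t * hb f p w w" by simp
    moreover have "t * t * hb f p w w \<le> 0" using w by (simp add: mult_nonneg_nonpos)
    ultimately show False using v by simp
  qed
  ultimately show ?thesis using q by auto
qed



lemma indef_ranks:
  fixes f :: "real^'n::finite \<Rightarrow> real"
  assumes sm: "smooth_fun f" and card: "CARD('n) \<ge> 3" and ind: "indefinite_mat (hess f p)"
  shows "\<exists>X1 X2. X1 \<noteq> 0 \<and> X2 \<noteq> 0 \<and> rank (JN f p X1) \<noteq> rank (JN f p X2)"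
proof -
  obtain v w where vw: "hb f p v v > 0" "hb f p w w < 0"
    using ind unfolding indefinite_mat_def by (auto simp: hb_hess)
  have v0: "v \<noteq> 0" using vw by auto
  show ?thesis
  proof (cases "\<exists>X0. X0 \<noteq> 0 \<and> hess f p *v X0 = 0")
    case True
    then obtain X0 where X0: "X0 \<noteq> 0" "hess f p *v X0 = 0" by blast
    have "rank (JN f p X0) = 0" using JN_zero[OF sm X0(2)] by simp
    moreover have "rank (JN f p v) \<noteq> 0" using JN_nonzero[OF sm vw] rank_eq_0 by blast
    ultimately have "rank (JN f p X0) \<noteq> rank (JN f p v)" by simp
    then show ?thesis using X0(1) v0 by blast
  next
    case False
    then have inj: "\<And>u. hess f p *v u = 0 \<Longrightarrow> u = 0" by blast
    obtain X where X: "X \<noteq> 0" "hb f p X X = 0" using null_exists[OF sm vw] by blast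
    have "hess f p *v X \<noteq> 0" using inj X by blast
    then have "rank (JN f p X) = 1" using rank_JN_one[OF sm _ X(2)] by blast
    moreover have "rank (JN f p v) = CARD('n) - 1" using rank_JN_full[OF sm inj] vw by simp
    moreover have "(1::nat) \<noteq> CARD('n) - 1" using card by simp
    ultimately have "rank (JN f p X) \<noteq> rank (JN f p v)" by simp
    then show ?thesis using X(1) v0 by blast
  qed
qed

theorem theorem4p1:
  fixes f :: "real^'n::finite \<Rightarrow> real"
  assumes "CARD('n) \<ge> 3" and "smooth_fun f"
  shows
    "(\<forall>P::real^('n + 'n). definite_mat (hess f (xpart P)) \<longrightarrow>
        (\<forall>x. gform (gf f) P x x \<noteq> 0 \<longrightarrow>
             rank (jacobiW (gf f) P x) = CARD('n) - 1 \<and>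
             jacobiW (gf f) P x ** jacobiW (gf f) P x = 0))
   \<and> ((\<forall>P::real^('n + 'n). definite_mat (hess f (xpart P))) \<longrightarrow>
        conf_spacelike_JO (gf f) \<and> conf_timelike_JO (gf f))
   \<and> (\<forall>P::real^('n + 'n). indefinite_mat (hess f (xpart P)) \<longrightarrow>
        \<not> conf_spacelike_JO (gf f) \<and> \<not> conf_timelike_JO (gf f))
   \<and> (\<forall>P::real^('n + 'n). nondegenerate_mat (hess f (xpart P)) \<longrightarrow>
        (\<forall>e1 e2. on_pair (gf f) P 1 e1 e2 \<or> on_pair (gf f) P (-1) e1 e2 \<longrightarrow>
             rank (weylPi (gf f) P e1 e2) = 2 \<and>
             weylPi (gf f) P e1 e2 ** weylPi (gf f) P e1 e2 = 0))
   \<and> ((\<forall>P::real^('n + 'n). nondegenerate_mat (hess f (xpart P))) \<longrightarrow>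
        conf_spacelike_IP (gf f) \<and> conf_timelike_IP (gf f))"
proof -
  note sm = assms(2)
  have J: "\<And>P x. jacobiW (gf f) P x = low (transpose (JN f (xpart P) (xpart x)))" by (rule jacobiW_gf[OF sm])
  have W: "\<And>P e1 e2. weylPi (gf f) P e1 e2 = low (transpose (PN f (xpart P) (xpart e1) (xpart e2)))"
    by (rule weylPi_gf[OF sm])
  have rJ: "\<And>P x. rank (jacobiW (gf f) P x) = rank (JN f (xpart P) (xpart x))" by (simp add: J rank_low rank_transpose)
  have rW: "\<And>P e1 e2. rank (weylPi (gf f) P e1 e2) = rank (PN f (xpart P) (xpart e1) (xpart e2))"
    by (simp add: W rank_low rank_transpose)
  have sJ: "\<And>P x y. rank (jacobiW (gf f) P x) = rank (jacobiW (gf f) P y) \<Longrightarrow> same_jnf (jacobiW (gf f) P x) (jacobiW (gf f) P y)"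
    by (simp add: J rank_low low_same)
  have sW: "\<And>P e1 e2 u1 u2. rank (weylPi (gf f) P e1 e2) = rank (weylPi (gf f) P u1 u2) \<Longrightarrow>
      same_jnf (weylPi (gf f) P e1 e2) (weylPi (gf f) P u1 u2)"
    by (simp add: W rank_low low_same)
  have P1: "\<forall>P::real^('n + 'n). definite_mat (hess f (xpart P)) \<longrightarrow>
        (\<forall>x. gform (gf f) P x x \<noteq> 0 \<longrightarrow>
             rank (jacobiW (gf f) P x) = CARD('n) - 1 \<and>
             jacobiW (gf f) P x ** jacobiW (gf f) P x = 0)"
  proof (intro allI impI conjI)
    fix P :: "real^('n + 'n)" and x
    assume d: "definite_mat (hess f (xpart P))" and nn: "gform (gf f) P x x \<noteq> 0"
    have "hb f (xpart P) (xpart x) (xpart x) \<noteq> 0"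
      using definite_ne[OF d nonnull_xpart[OF nn]] by (simp add: hb_hess)
    then show "rank (jacobiW (gf f) P x) = CARD('n) - 1"
      unfolding rJ using rank_JN_full[OF sm definite_inj[OF d]] by blast
    show "jacobiW (gf f) P x ** jacobiW (gf f) P x = 0" by (simp add: J low_sq)
  qed
  have P2: "(\<forall>P::real^('n + 'n). definite_mat (hess f (xpart P))) \<longrightarrow>
        conf_spacelike_JO (gf f) \<and> conf_timelike_JO (gf f)"
  proof (intro impI conjI)
    assume a: "\<forall>P::real^('n + 'n). definite_mat (hess f (xpart P))"
    have "same_jnf (jacobiW (gf f) P x) (jacobiW (gf f) P y)"
      if "gform (gf f) P x x \<noteq> 0" "gform (gf f) P y y \<noteq> 0" for P x y
    proof (rule sJ)
      show "rank (jacobiW (gf f) P x) = rank (jacobiW (gf f) P y)" using P1 a that by simp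
    qed
    then show "conf_spacelike_JO (gf f)" "conf_timelike_JO (gf f)"
      unfolding conf_spacelike_JO_def conf_timelike_JO_def by simp_all
  qed
  have P3: "\<forall>P::real^('n + 'n). indefinite_mat (hess f (xpart P)) \<longrightarrow>
        \<not> conf_spacelike_JO (gf f) \<and> \<not> conf_timelike_JO (gf f)"
  proof (intro allI impI)
    fix P :: "real^('n + 'n)"
    assume "indefinite_mat (hess f (xpart P))"
    then obtain X1 X2 where X: "X1 \<noteq> 0" "X2 \<noteq> 0" "rank (JN f (xpart P) X1) \<noteq> rank (JN f (xpart P) X2)"
      using indef_ranks[OF sm assms(1)] by blast
    have bad: "\<not> (\<forall>x y. gform (gf f) P x x = eps \<and> gform (gf f) P y y = eps \<longrightarrow>
         same_jnf (jacobiW (gf f) P x) (jacobiW (gf f) P y))" for eps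
    proof
      assume h: "\<forall>x y. gform (gf f) P x x = eps \<and> gform (gf f) P y y = eps \<longrightarrow>
         same_jnf (jacobiW (gf f) P x) (jacobiW (gf f) P y)"
      obtain x1 where x1: "xpart x1 = X1" "gform (gf f) P x1 x1 = eps" using exists_unit[OF X(1)] by blast
      obtain x2 where x2: "xpart x2 = X2" "gform (gf f) P x2 x2 = eps" using exists_unit[OF X(2)] by blast
      have "rank (jacobiW (gf f) P x1) = rank (jacobiW (gf f) P x2)"
        using h x1 x2 same_jnf_rank by blast
      then show False using X(3) x1 x2 by (simp add: rJ)
    qed
    show "\<not> conf_spacelike_JO (gf f) \<and> \<not> conf_timelike_JO (gf f)"
      unfolding conf_spacelike_JO_def conf_timelike_JO_def using bad by blast
  qed
  have P4: "\<forall>P::real^('n + 'n). nondegenerate_mat (hess f (xpart P)) \<longrightarrow>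
        (\<forall>e1 e2. on_pair (gf f) P 1 e1 e2 \<or> on_pair (gf f) P (-1) e1 e2 \<longrightarrow>
             rank (weylPi (gf f) P e1 e2) = 2 \<and>
             weylPi (gf f) P e1 e2 ** weylPi (gf f) P e1 e2 = 0)"
  proof (intro allI impI conjI)
    fix P :: "real^('n + 'n)" and e1 e2
    assume nd: "nondegenerate_mat (hess f (xpart P))" and op: "on_pair (gf f) P 1 e1 e2 \<or> on_pair (gf f) P (-1) e1 e2"
    then obtain eps :: real where op': "on_pair (gf f) P eps e1 e2" "eps \<noteq> 0"
    proof (cases "on_pair (gf f) P 1 e1 e2")
      case True then show ?thesis using that[of 1] by simp
    next
      case False then show ?thesis using that[of "-1"] op by simp
    qed
    have ind: "a = 0 \<and> b = 0" if "a *\<^sub>R (hess f (xpart P) *v xpart e1) + b *\<^sub>R (hess f (xpart P) *v xpart e2) = 0" for a b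
    proof -
      have "hess f (xpart P) *v (a *\<^sub>R xpart e1 + b *\<^sub>R xpart e2) = 0"
        using that by (simp add: matrix_vector_right_distrib matrix_vector_mult_scaleR)
      then have "a *\<^sub>R xpart e1 + b *\<^sub>R xpart e2 = 0" by (rule nondeg_inj[OF nd])
      then show ?thesis by (rule on_pair_indep[OF op'])
    qed
    show "rank (weylPi (gf f) P e1 e2) = 2" unfolding rW by (rule rank_PN[OF sm ind])
    show "weylPi (gf f) P e1 e2 ** weylPi (gf f) P e1 e2 = 0" by (simp add: W low_sq)
  qed
  have P5: "(\<forall>P::real^('n + 'n). nondegenerate_mat (hess f (xpart P))) \<longrightarrow>
        conf_spacelike_IP (gf f) \<and> conf_timelike_IP (gf f)"
  proof (intro impI conjI)
    assume a: "\<forall>P::real^('n + 'n). nondegenerate_mat (hess f (xpart P))"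
    have "same_jnf (weylPi (gf f) P e1 e2) (weylPi (gf f) P u1 u2)"
      if "on_pair (gf f) P 1 e1 e2 \<or> on_pair (gf f) P (-1) e1 e2"
         "on_pair (gf f) P 1 u1 u2 \<or> on_pair (gf f) P (-1) u1 u2" for P e1 e2 u1 u2
    proof (rule sW)
      have "rank (weylPi (gf f) P e1 e2) = 2" using P4 a that(1) by blast
      moreover have "rank (weylPi (gf f) P u1 u2) = 2" using P4 a that(2) by blast
      ultimately show "rank (weylPi (gf f) P e1 e2) = rank (weylPi (gf f) P u1 u2)" by simp
    qed
    then show "conf_spacelike_IP (gf f)" "conf_timelike_IP (gf f)"
      unfolding conf_spacelike_IP_def conf_timelike_IP_def by simp_all
  qed
  show ?thesis using P1 P2 P3 P4 P5 by blast
qed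


end
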